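(* Let $K$ be a triangle and $\mathcal B(K)=\{\mathbf v\in[P^4(K)]^2:\mathbf v=\mathbf 0\text{ on }\partial K\}$. If $\mathbf v\in\mathcal B(K)$ and $\operatorname{div}\mathbf v=0$, then $\mathbf v=\mathbf 0$.
   Context: For a triangle $K\subset\mathbb R^2$ and $k\ge0$, $P^k(K)$ denotes the set of functions which coincide with a polynomial of degree at most $k$ on $K$ and vanish outside $K$. *)

theory Defs
  imports "HOL-Analysis.Analysis"
begin

definition poly2 :: "nat \<Rightarrow> (nat \<Rightarrow> nat \<Rightarrow> real) \<Rightarrow> real \<times> real \<Rightarrow> real" where
  "poly2 k c z = (\<Sum>(i,j)\<in>{(i,j). i + j \<le> k}. c i j * fst z ^ i * snd z ^ j)"

definition is_triangle :: "(real \<times> real) set \<Rightarrow> bool" where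
  "is_triangle K \<longleftrightarrow> (\<exists>a b c. \<not> collinear {a, b, c} \<and> K = convex hull {a, b, c})"

definition Pk :: "nat \<Rightarrow> (real \<times> real) set \<Rightarrow> (real \<times> real \<Rightarrow> real) set" where
  "Pk k K = {f. \<exists>c. (\<forall>z\<in>K. f z = poly2 k c z) \<and> (\<forall>z. z \<notin> K \<longrightarrow> f z = 0)}"

definition Pk2 :: "nat \<Rightarrow> (real \<times> real) set \<Rightarrow> (real \<times> real \<Rightarrow> real \<times> real) set" where
  "Pk2 k K = {v. (\<lambda>z. fst (v z)) \<in> Pk k K \<and> (\<lambda>z. snd (v z)) \<in> Pk k K}"

definition divergence :: "(real \<times> real \<Rightarrow> real \<times> real) \<Rightarrow> real \<times> real \<Rightarrow> real" where
  "divergence v z = deriv (\<lambda>s. fst (v (s, snd z))) (fst z) + deriv (\<lambda>t. snd (v (fst z, t))) (snd z)"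

definition bubble :: "(real \<times> real) set \<Rightarrow> (real \<times> real \<Rightarrow> real \<times> real) set" where
  "bubble K = {v \<in> Pk2 4 K. \<forall>z\<in>frontier K. v z = 0}"

end

theory Submission
  imports Defs
begin

definition ispoly :: "nat \<Rightarrow> (real \<times> real \<Rightarrow> real) \<Rightarrow> bool" where
  "ispoly k f \<longleftrightarrow> (\<exists>c. \<forall>z. f z = poly2 k c z)"

lemma finite_idx: "finite {(i,j). i + j \<le> (k::nat)}"
  by (rule finite_subset[of _ "{..k}\<times>{..k}"]) auto

lemma poly2_alt: "poly2 k c z = (\<Sum>p\<in>{(i, j). i + j \<le> k}. c (fst p) (snd p) * (fst z ^ fst p * snd z ^ snd p))"
  by (simp add: poly2_def case_prod_unfold mult.assoc)

lemma ispoly_add: "ispoly k f \<Longrightarrow> ispoly k g \<Longrightarrow> ispoly k (\<lambda>z. f z + g z)"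
  unfolding ispoly_def poly2_alt
proof (elim exE)
  fix c d assume c: "\<forall>z. f z = (\<Sum>p\<in>{(i, j). i + j \<le> k}. c (fst p) (snd p) * (fst z ^ fst p * snd z ^ snd p))"
    and d: "\<forall>z. g z = (\<Sum>p\<in>{(i, j). i + j \<le> k}. d (fst p) (snd p) * (fst z ^ fst p * snd z ^ snd p))"
  show "\<exists>e. \<forall>z. f z + g z = (\<Sum>p\<in>{(i, j). i + j \<le> k}. e (fst p) (snd p) * (fst z ^ fst p * snd z ^ snd p))"
    by (rule exI[of _ "\<lambda>i j. c i j + d i j"]) (simp add: c d distrib_right sum.distrib)
qed

lemma ispoly_scale: "ispoly k f \<Longrightarrow> ispoly k (\<lambda>z. r * f z)"
  unfolding ispoly_def poly2_alt
proof (elim exE)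
  fix c assume c: "\<forall>z. f z = (\<Sum>p\<in>{(i, j). i + j \<le> k}. c (fst p) (snd p) * (fst z ^ fst p * snd z ^ snd p))"
  show "\<exists>e. \<forall>z. r * f z = (\<Sum>p\<in>{(i, j). i + j \<le> k}. e (fst p) (snd p) * (fst z ^ fst p * snd z ^ snd p))"
    by (rule exI[of _ "\<lambda>i j. r * c i j"]) (simp add: c sum_distrib_left mult.assoc)
qed

lemma ispoly_zero: "ispoly k (\<lambda>z. 0)"
  unfolding ispoly_def poly2_def by (rule exI[of _ "\<lambda>i j. 0"]) simp

lemma ispoly_sum: "finite S \<Longrightarrow> (\<And>x. x \<in> S \<Longrightarrow> ispoly k (f x)) \<Longrightarrow> ispoly k (\<lambda>z. \<Sum>x\<in>S. f x z)"
proof (induction S rule: finite_induct)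
  case empty then show ?case by (simp add: ispoly_zero)
next
  case (insert x F) then show ?case by (simp add: ispoly_add)
qed

lemma ispoly_monom: "a + b \<le> k \<Longrightarrow> ispoly k (\<lambda>z. fst z ^ a * snd z ^ b)"
  unfolding ispoly_def poly2_def
proof (rule exI[of _ "\<lambda>i j. if i = a \<and> j = b then 1 else 0"], intro allI)
  fix z :: "real \<times> real" assume ab: "a + b \<le> k"
  have "(\<Sum>(i, j)\<in>{(i, j). i + j \<le> k}. (if i = a \<and> j = b then 1 else 0) * fst z ^ i * snd z ^ j)
     = (\<Sum>p\<in>{(i, j). i + j \<le> k}. if p = (a,b) then fst z ^ a * snd z ^ b else 0)"
  proof (intro sum.cong refl)
    fix p assume "p \<in> {(i, j). i + j \<le> k}"
    obtain i j where "p = (i,j)" by (cases p)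
    then show "(case p of (i, j) \<Rightarrow> (if i = a \<and> j = b then 1 else 0) * fst z ^ i * snd z ^ j) = (if p = (a,b) then fst z ^ a * snd z ^ b else 0)"
      by (cases "i = a \<and> j = b") auto
  qed
  also have "\<dots> = fst z ^ a * snd z ^ b" using ab by (simp add: finite_idx)
  finally show "fst z ^ a * snd z ^ b = (\<Sum>(i, j)\<in>{(i, j). i + j \<le> k}. (if i = a \<and> j = b then 1 else 0) * fst z ^ i * snd z ^ j)" by simp
qed

lemma ispoly_mono: "k \<le> m \<Longrightarrow> ispoly k f \<Longrightarrow> ispoly m f"
proof -
  assume km: "k \<le> m" and "ispoly k f"
  then obtain c where c: "\<And>z. f z = poly2 k c z" unfolding ispoly_def by blast
  have "ispoly m (\<lambda>z. \<Sum>p\<in>{(i, j). i + j \<le> k}. c (fst p) (snd p) * (fst z ^ fst p * snd z ^ snd p))"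
    by (rule ispoly_sum[OF finite_idx], rule ispoly_scale, rule ispoly_monom, use km in auto)
  moreover have "f = (\<lambda>z. \<Sum>p\<in>{(i, j). i + j \<le> k}. c (fst p) (snd p) * (fst z ^ fst p * snd z ^ snd p))"
    by (auto simp: c poly2_def case_prod_unfold mult.assoc)
  ultimately show ?thesis by simp
qed

lemma ispoly_expand: "ispoly k f \<Longrightarrow> \<exists>c. f = (\<lambda>z. \<Sum>p\<in>{(i, j). i + j \<le> k}. c (fst p) (snd p) * (fst z ^ fst p * snd z ^ snd p))"
  unfolding ispoly_def poly2_alt by (auto simp: fun_eq_iff)

lemma ispoly_mult: "ispoly k f \<Longrightarrow> ispoly m g \<Longrightarrow> ispoly (k + m) (\<lambda>z. f z * g z)"
proof -
  assume fk: "ispoly k f" and gm: "ispoly m g"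
  obtain c where c: "f = (\<lambda>z. \<Sum>p\<in>{(i, j). i + j \<le> k}. c (fst p) (snd p) * (fst z ^ fst p * snd z ^ snd p))"
    using ispoly_expand[OF fk] by blast
  obtain d where d: "g = (\<lambda>z. \<Sum>p\<in>{(i, j). i + j \<le> m}. d (fst p) (snd p) * (fst z ^ fst p * snd z ^ snd p))"
    using ispoly_expand[OF gm] by blast
  have "ispoly (k+m) (\<lambda>z. \<Sum>p\<in>{(i, j). i + j \<le> k}. \<Sum>q\<in>{(i, j). i + j \<le> m}.
      (c (fst p) (snd p) * d (fst q) (snd q)) * (fst z ^ (fst p + fst q) * snd z ^ (snd p + snd q)))"
    by (rule ispoly_sum[OF finite_idx], rule ispoly_sum[OF finite_idx]) (auto intro!: ispoly_scale ispoly_monom)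
  moreover have "(\<lambda>z. f z * g z) = (\<lambda>z. \<Sum>p\<in>{(i, j). i + j \<le> k}. \<Sum>q\<in>{(i, j). i + j \<le> m}.
      (c (fst p) (snd p) * d (fst q) (snd q)) * (fst z ^ (fst p + fst q) * snd z ^ (snd p + snd q)))"
  proof -
    have t: "(a * (x ^ i * y ^ j)) * (b * (x ^ i' * y ^ j')) = (a * b) * (x ^ (i + i') * y ^ (j + j'))"
      for a b x y :: real and i j i' j' :: nat by (simp add: power_add)
    show ?thesis unfolding c d sum_product t by (rule refl)
  qed
  ultimately show ?thesis by simp
qed

lemma ispoly_const: "ispoly k (\<lambda>z. r)"
proof -
  have "ispoly k (\<lambda>z. r * (fst z ^ 0 * snd z ^ 0))" by (intro ispoly_scale ispoly_monom) simp
  then show ?thesis by simp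
qed

lemma ispoly_affine: "ispoly 1 (\<lambda>z. r + p * fst z + q * snd z)"
proof -
  have "ispoly 1 (\<lambda>z. r + p * (fst z ^ 1 * snd z ^ 0) + q * (fst z ^ 0 * snd z ^ 1))"
    by (intro ispoly_add ispoly_scale ispoly_monom ispoly_const) auto
  then show ?thesis by simp
qed

lemma ispoly_pow: "ispoly k f \<Longrightarrow> ispoly (k * n) (\<lambda>z. f z ^ n)"
proof (induction n)
  case 0 then show ?case by (simp add: ispoly_const)
next
  case (Suc n)
  then have "ispoly (k + k * n) (\<lambda>z. f z * f z ^ n)" by (intro ispoly_mult) auto
  then show ?case by simp
qed

lemma ispoly_compose:
  assumes "ispoly k g" "ispoly 1 L1" "ispoly 1 L2"
  shows "ispoly k (\<lambda>z. g (L1 z, L2 z))"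
proof -
  obtain c where c: "g = (\<lambda>z. \<Sum>p\<in>{(i, j). i + j \<le> k}. c (fst p) (snd p) * (fst z ^ fst p * snd z ^ snd p))"
    using ispoly_expand[OF assms(1)] by blast
  have "ispoly k (\<lambda>z. \<Sum>p\<in>{(i, j). i + j \<le> k}. c (fst p) (snd p) * (L1 z ^ fst p * L2 z ^ snd p))"
  proof (rule ispoly_sum[OF finite_idx], rule ispoly_scale)
    fix p assume p: "p \<in> {(i, j). i + j \<le> k}"
    have "ispoly (1 * fst p + 1 * snd p) (\<lambda>z. L1 z ^ fst p * L2 z ^ snd p)"
      by (intro ispoly_mult ispoly_pow assms)
    then show "ispoly k (\<lambda>z. L1 z ^ fst p * L2 z ^ snd p)"
      by (rule ispoly_mono[rotated]) (use p in auto)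
  qed
  then show ?thesis by (simp add: c)
qed

definition px :: "nat \<Rightarrow> (nat \<Rightarrow> nat \<Rightarrow> real) \<Rightarrow> real \<times> real \<Rightarrow> real" where
  "px k c z = (\<Sum>(i,j)\<in>{(i,j). i + j \<le> k}. c i j * (of_nat i * fst z ^ (i - 1)) * snd z ^ j)"
definition py :: "nat \<Rightarrow> (nat \<Rightarrow> nat \<Rightarrow> real) \<Rightarrow> real \<times> real \<Rightarrow> real" where
  "py k c z = (\<Sum>(i,j)\<in>{(i,j). i + j \<le> k}. c i j * fst z ^ i * (of_nat j * snd z ^ (j - 1)))"

lemma poly2_dir_deriv:
  "((\<lambda>s. poly2 k c (x0 + s*h1, y0 + s*h2)) has_real_derivative
     (h1 * px k c (x0 + s*h1, y0 + s*h2) + h2 * py k c (x0 + s*h1, y0 + s*h2))) (at s)"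
proof -
  have "((\<lambda>s. \<Sum>p\<in>{(i,j). i + j \<le> k}. c (fst p) (snd p) * (x0 + s*h1) ^ fst p * (y0 + s*h2) ^ snd p) has_real_derivative
     (\<Sum>p\<in>{(i,j). i + j \<le> k}. c (fst p) (snd p) * ((of_nat (fst p) * (x0 + s*h1) ^ (fst p - 1) * h1) * (y0 + s*h2) ^ snd p
        + (x0 + s*h1) ^ fst p * (of_nat (snd p) * (y0 + s*h2) ^ (snd p - 1) * h2)))) (at s)"
    by (rule DERIV_sum) (auto intro!: derivative_eq_intros simp: algebra_simps)
  moreover have "(\<Sum>p\<in>{(i,j). i + j \<le> k}. c (fst p) (snd p) * ((of_nat (fst p) * (x0 + s*h1) ^ (fst p - 1) * h1) * (y0 + s*h2) ^ snd p
        + (x0 + s*h1) ^ fst p * (of_nat (snd p) * (y0 + s*h2) ^ (snd p - 1) * h2)))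
     = h1 * px k c (x0 + s*h1, y0 + s*h2) + h2 * py k c (x0 + s*h1, y0 + s*h2)"
    by (simp add: px_def py_def case_prod_unfold sum_distrib_left sum.distrib[symmetric] algebra_simps)
  ultimately show ?thesis by (simp add: poly2_def case_prod_unfold)
qed

lemma poly2_deriv_x:
  "((\<lambda>s. poly2 k c (s, y)) has_real_derivative px k c (x, y)) (at x)"
  using poly2_dir_deriv[of k c 0 1 y 0 x] by simp

lemma poly2_deriv_y:
  "((\<lambda>t. poly2 k c (x, t)) has_real_derivative py k c (x, y)) (at y)"
  using poly2_dir_deriv[of k c x 0 0 1 y] by simp

definition dt :: "real \<times> real \<Rightarrow> real \<times> real \<Rightarrow> real \<times> real \<Rightarrow> real" where
  "dt a b c = fst (b - a) * snd (c - a) - snd (b - a) * fst (c - a)"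

definition FF :: "real \<times> real \<Rightarrow> real \<times> real \<Rightarrow> real \<times> real \<Rightarrow> real \<Rightarrow> real \<Rightarrow> real \<times> real" where
  "FF a b c s t = a + s *\<^sub>R (b - a) + t *\<^sub>R (c - a)"

definition G1 :: "real \<times> real \<Rightarrow> real \<times> real \<Rightarrow> real \<times> real \<Rightarrow> real \<times> real \<Rightarrow> real" where
  "G1 a b c z = (snd (c - a) * (fst z - fst a) - fst (c - a) * (snd z - snd a)) / dt a b c"
definition G2 :: "real \<times> real \<Rightarrow> real \<times> real \<Rightarrow> real \<times> real \<Rightarrow> real \<times> real \<Rightarrow> real" where
  "G2 a b c z = (fst (b - a) * (snd z - snd a) - snd (b - a) * (fst z - fst a)) / dt a b c"

lemma dt_nz: assumes "\<not> collinear {a, b, c}" shows "dt a b c \<noteq> 0"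
proof
  assume d0: "dt a b c = 0"
  have "collinear {0, b - a, c - a}"
  proof (cases "b - a = 0")
    case True then show ?thesis by (simp add: collinear_lemma)
  next
    case False
    show ?thesis
    proof (cases "fst (b - a) = 0")
      case True
      with False have s: "snd (b - a) \<noteq> 0" by (simp add: prod_eq_iff)
      with True d0 have f2: "fst (c - a) = 0" by (simp add: dt_def)
      have "c - a = (snd (c - a) / snd (b - a)) *\<^sub>R (b - a)"
        using True f2 s by (simp add: prod_eq_iff)
      then show ?thesis by (subst collinear_lemma) blast
    next
      case f: False
      have l: "\<And>p q r w::real. p \<noteq> 0 \<Longrightarrow> p*w - q*r = 0 \<Longrightarrow> r = (r/p)*p \<and> w = (r/p)*q"
        by (auto simp: field_simps)
      have ll: "fst (c - a) = (fst (c - a) / fst (b - a)) * fst (b - a) \<and> snd (c - a) = (fst (c - a) / fst (b - a)) * snd (b - a)"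
        by (rule l[OF f d0[unfolded dt_def]])
      have "c - a = (fst (c - a) / fst (b - a)) *\<^sub>R (b - a)"
        by (rule prod_eqI) (use ll in \<open>simp_all only: fst_scaleR snd_scaleR real_scaleR_def\<close>)
      then show ?thesis by (subst collinear_lemma) blast
    qed
  qed
  then have "collinear {b, a, c}" by (subst collinear_3) simp
  then show False using assms by (simp add: insert_commute)
qed

context
  fixes a b c :: "real \<times> real"
  assumes nc: "\<not> collinear {a, b, c}"
begin

lemma dtnz: "dt a b c \<noteq> 0" using dt_nz[OF nc] .

lemma G_FF: "G1 a b c (FF a b c s t) = s" "G2 a b c (FF a b c s t) = t"
  using dtnz by (auto simp: G1_def G2_def FF_def dt_def field_simps)

lemma FF_G: "FF a b c (G1 a b c z) (G2 a b c z) = z"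
proof -
  define p q r w X Y where "p = fst (b-a)" "q = snd (b-a)" "r = fst (c-a)" "w = snd (c-a)"
    "X = fst z - fst a" "Y = snd z - snd a"
  have D: "dt a b c = p*w - q*r" by (simp add: dt_def p_q_r_w_X_Y_def)
  have DD: "p*w - q*r \<noteq> 0" using dtnz D by simp
  have g1: "G1 a b c z = (w*X - r*Y)/(p*w - q*r)" by (simp add: G1_def D p_q_r_w_X_Y_def)
  have g2: "G2 a b c z = (p*Y - q*X)/(p*w - q*r)" by (simp add: G2_def D p_q_r_w_X_Y_def)
  have aux: "(w*X - r*Y)/(p*w - q*r) * p + (p*Y - q*X)/(p*w - q*r) * r = X \<and> (w*X - r*Y)/(p*w - q*r) * q + (p*Y - q*X)/(p*w - q*r) * w = Y"
  proof -
    have e1: "(w*X - r*Y)*p + (p*Y - q*X)*r = X*(p*w-q*r)" by (simp add: algebra_simps)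
    have e2: "(w*X - r*Y)*q + (p*Y - q*X)*w = Y*(p*w-q*r)" by (simp add: algebra_simps)
    have "(w*X - r*Y)/(p*w - q*r) * p + (p*Y - q*X)/(p*w - q*r) * r = ((w*X - r*Y)*p + (p*Y - q*X)*r)/(p*w - q*r)"
      by (simp add: add_divide_distrib times_divide_eq_left)
    moreover have "(w*X - r*Y)/(p*w - q*r) * q + (p*Y - q*X)/(p*w - q*r) * w = ((w*X - r*Y)*q + (p*Y - q*X)*w)/(p*w - q*r)"
      by (simp add: add_divide_distrib times_divide_eq_left)
    ultimately show ?thesis unfolding e1 e2 using DD by simp
  qed
  have f: "fst (FF a b c s t) = fst a + s * p + t * r" "snd (FF a b c s t) = snd a + s * q + t * w" for s t
    by (simp_all add: FF_def p_q_r_w_X_Y_def)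
  show ?thesis
    by (rule prod_eqI) (use aux in \<open>simp_all only: f g1 g2\<close>, simp_all add: p_q_r_w_X_Y_def)
qed

lemma hull_char: "z \<in> convex hull {a, b, c} \<longleftrightarrow> 0 \<le> G1 a b c z \<and> 0 \<le> G2 a b c z \<and> G1 a b c z + G2 a b c z \<le> 1"
proof
  assume "z \<in> convex hull {a, b, c}"
  then obtain u v where "z = FF a b c u v" "0 \<le> u" "0 \<le> v" "u + v \<le> 1"
    unfolding convex_hull_3_alt FF_def by blast
  then show "0 \<le> G1 a b c z \<and> 0 \<le> G2 a b c z \<and> G1 a b c z + G2 a b c z \<le> 1" by (simp add: G_FF)
next
  assume "0 \<le> G1 a b c z \<and> 0 \<le> G2 a b c z \<and> G1 a b c z + G2 a b c z \<le> 1"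
  then show "z \<in> convex hull {a, b, c}"
    unfolding convex_hull_3_alt using FF_G[of z] unfolding FF_def by (metis (mono_tags, lifting) mem_Collect_eq)
qed

lemma cont_G1: "continuous_on UNIV (G1 a b c)" unfolding G1_def by (intro continuous_intros) (simp add: dtnz)
lemma cont_G2: "continuous_on UNIV (G2 a b c)" unfolding G2_def by (intro continuous_intros) (simp add: dtnz)

lemma interior_pt:
  assumes "0 < s" "0 < t" "s + t < 1"
  shows "FF a b c s t \<in> interior (convex hull {a, b, c})"
proof -
  let ?O = "{z. 0 < G1 a b c z} \<inter> {z. 0 < G2 a b c z} \<inter> {z. G1 a b c z + G2 a b c z < 1}"
  have "open ?O"
    by (intro open_Int open_Collect_less continuous_on_add cont_G1 cont_G2 continuous_on_const)
  moreover have "?O \<subseteq> convex hull {a, b, c}" by (auto simp: hull_char)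
  moreover have "FF a b c s t \<in> ?O" using assms by (simp add: G_FF)
  ultimately show ?thesis by (meson interior_maximal subsetD)
qed

lemma G_shift: "G1 a b c (z + r *\<^sub>R d) = G1 a b c z + r * G1 a b c (a + d)"
                "G2 a b c (z + r *\<^sub>R d) = G2 a b c z + r * G2 a b c (a + d)"
  by (simp_all add: G1_def G2_def add_divide_distrib[symmetric] algebra_simps)

lemma interior_shift:
  fixes z d :: "real \<times> real"
  assumes "z \<in> interior S" "d \<noteq> 0"
  shows "\<exists>r>0. z + r *\<^sub>R d \<in> S"
proof -
  obtain e where e: "e > 0" "ball z e \<subseteq> S" using assms(1) mem_interior by blast
  have nd: "norm d > 0" using assms(2) by simp
  define r where "r = e / (2 * norm d)"
  have r0: "r > 0" using e nd by (simp add: r_def)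
  have "dist z (z + r *\<^sub>R d) = r * norm d" using r0 by (simp add: dist_norm)
  also have "\<dots> = e / 2" using nd by (simp add: r_def)
  finally have "z + r *\<^sub>R d \<in> ball z e" using e by simp
  then show ?thesis using e r0 by blast
qed

lemma frontier_pt:
  assumes "0 \<le> s" "0 \<le> t" "s + t \<le> 1" "s = 0 \<or> t = 0 \<or> s + t = 1"
  shows "FF a b c s t \<in> frontier (convex hull {a, b, c})"
proof -
  let ?K = "convex hull {a, b, c}"
  let ?z = "FF a b c s t"
  have zK: "?z \<in> ?K" using assms by (simp add: hull_char G_FF)
  have cl: "closed ?K" by (simp add: compact_imp_closed finite_imp_compact_convex_hull)
  have "?z \<notin> interior ?K"
  proof
    assume zi: "?z \<in> interior ?K"
    have shift: "\<exists>r>0. 0 \<le> s + r * G1 a b c (a + d) \<and> 0 \<le> t + r * G2 a b c (a + d) \<and> s + r * G1 a b c (a + d) + (t + r * G2 a b c (a + d)) \<le> 1"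
      if dn: "d \<noteq> 0" for d
    proof -
      obtain r where r: "r > 0" "?z + r *\<^sub>R d \<in> ?K" using interior_shift[OF zi dn] by blast
      from r(2) have "0 \<le> G1 a b c (?z + r *\<^sub>R d) \<and> 0 \<le> G2 a b c (?z + r *\<^sub>R d) \<and> G1 a b c (?z + r *\<^sub>R d) + G2 a b c (?z + r *\<^sub>R d) \<le> 1"
        by (simp only: hull_char)
      then show ?thesis unfolding G_shift G_FF using r(1) by blast
    qed
    have e1: "b - a \<noteq> 0" and e2: "c - a \<noteq> 0" using dtnz by (auto simp: dt_def)
    have m1: "- (b - a) \<noteq> 0" and m2: "- (c - a) \<noteq> 0" using e1 e2 by auto
    have Gb: "G1 a b c (a + (b - a)) = 1" "G2 a b c (a + (b - a)) = 0"
      using G_FF[of 1 0] by (simp_all add: FF_def)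
    have Gmc: "G1 a b c (a + - (c - a)) = 0" "G2 a b c (a + - (c - a)) = - 1"
      using G_FF[of 0 "-1"] by (simp_all add: FF_def)
    have Gmb: "G1 a b c (a + - (b - a)) = - 1" "G2 a b c (a + - (b - a)) = 0"
      using G_FF[of "-1" 0] by (simp_all add: FF_def)
    show False
    proof -
      { assume "s = 0"
        then have False using shift[OF m1] unfolding Gmb by auto }
      moreover
      { assume "t = 0"
        then have False using shift[OF m2] unfolding Gmc by auto }
      moreover
      { assume "s + t = 1"
        then have False using shift[OF e1] unfolding Gb by auto }
      ultimately show False using assms(4) by blast
    qed
  qed
  then show ?thesis using zK cl by (simp add: frontier_def closure_closed)
qed

end

lemma idx4: "{(i,j). i + j \<le> (4::nat)} = {(0,0),(0,1),(0,2),(0,3),(0,4),(1,0),(1,1),(1,2),(1,3),(2,0),(2,1),(2,2),(3,0),(3,1),(4,0)}"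
proof (rule set_eqI, clarify)
  fix i j :: nat
  show "((i,j) \<in> {(i,j). i + j \<le> 4}) = ((i,j) \<in> {(0,0),(0,1),(0,2),(0,3),(0,4),(1,0),(1,1),(1,2),(1,3),(2,0),(2,1),(2,2),(3,0),(3,1),(4,0)})"
  proof
    assume "(i,j) \<in> {(i,j). i + j \<le> 4}"
    then have "i + j \<le> 4" by simp
    then have "i = 0 \<and> j \<le> 4 \<or> i = 1 \<and> j \<le> 3 \<or> i = 2 \<and> j \<le> 2 \<or> i = 3 \<and> j \<le> 1 \<or> i = 4 \<and> j = 0" by arith
    moreover have "j \<le> 4 \<longleftrightarrow> j = 0 \<or> j = 1 \<or> j = 2 \<or> j = 3 \<or> j = 4" by arith
    moreover have "j \<le> 3 \<longleftrightarrow> j = 0 \<or> j = 1 \<or> j = 2 \<or> j = 3" by arith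
    moreover have "j \<le> 2 \<longleftrightarrow> j = 0 \<or> j = 1 \<or> j = 2" by arith
    moreover have "j \<le> 1 \<longleftrightarrow> j = 0 \<or> j = 1" by arith
    ultimately show "(i,j) \<in> {(0,0),(0,1),(0,2),(0,3),(0,4),(1,0),(1,1),(1,2),(1,3),(2,0),(2,1),(2,2),(3,0),(3,1),(4,0)}"
      by auto
  qed auto
qed

lemma poly2_4: "poly2 4 c (x, y) =
  c 0 0 + c 0 1 * y + c 0 2 * y^2 + c 0 3 * y^3 + c 0 4 * y^4
  + c 1 0 * x + c 1 1 * x * y + c 1 2 * x * y^2 + c 1 3 * x * y^3
  + c 2 0 * x^2 + c 2 1 * x^2 * y + c 2 2 * x^2 * y^2
  + c 3 0 * x^3 + c 3 1 * x^3 * y + c 4 0 * x^4"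
  unfolding poly2_def idx4 by (simp add: algebra_simps)

lemma px_4: "px 4 c (x, y) =
    c 1 0 + c 1 1 * y + c 1 2 * y^2 + c 1 3 * y^3
  + 2 * c 2 0 * x + 2 * c 2 1 * x * y + 2 * c 2 2 * x * y^2
  + 3 * c 3 0 * x^2 + 3 * c 3 1 * x^2 * y + 4 * c 4 0 * x^3"
  unfolding px_def idx4 by (simp add: algebra_simps)

lemma py_4: "py 4 c (x, y) =
    c 0 1 + 2 * c 0 2 * y + 3 * c 0 3 * y^2 + 4 * c 0 4 * y^3
  + c 1 1 * x + 2 * c 1 2 * x * y + 3 * c 1 3 * x * y^2
  + c 2 1 * x^2 + 2 * c 2 2 * x^2 * y + c 3 1 * x^3"
  unfolding py_def idx4 by (simp add: algebra_simps)

lemma alg4: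
  fixes u w :: "nat \<Rightarrow> nat \<Rightarrow> real"
  assumes E: "\<And>s t. 0 \<le> s \<Longrightarrow> 0 \<le> t \<Longrightarrow> s + t \<le> 1 \<Longrightarrow> s = 0 \<or> t = 0 \<or> s + t = 1 \<Longrightarrow> poly2 4 u (s,t) = 0 \<and> poly2 4 w (s,t) = 0"
    and Dv: "\<And>s t. 0 < s \<Longrightarrow> 0 < t \<Longrightarrow> s + t < 1 \<Longrightarrow> px 4 u (s,t) + py 4 w (s,t) = 0"
  shows "poly2 4 u z = 0 \<and> poly2 4 w z = 0"
proof -
  have e0: "poly2 4 u (0,0) = 0 \<and> poly2 4 w (0,0) = 0" by (rule E) simp_all
  note e0u = e0[THEN conjunct1] and e0w = e0[THEN conjunct2]
  have e1: "poly2 4 u ((1/4),0) = 0 \<and> poly2 4 w ((1/4),0) = 0" by (rule E) simp_all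
  note e1u = e1[THEN conjunct1] and e1w = e1[THEN conjunct2]
  have e2: "poly2 4 u ((1/2),0) = 0 \<and> poly2 4 w ((1/2),0) = 0" by (rule E) simp_all
  note e2u = e2[THEN conjunct1] and e2w = e2[THEN conjunct2]
  have e3: "poly2 4 u ((3/4),0) = 0 \<and> poly2 4 w ((3/4),0) = 0" by (rule E) simp_all
  note e3u = e3[THEN conjunct1] and e3w = e3[THEN conjunct2]
  have e4: "poly2 4 u (1,0) = 0 \<and> poly2 4 w (1,0) = 0" by (rule E) simp_all
  note e4u = e4[THEN conjunct1] and e4w = e4[THEN conjunct2]
  have e5: "poly2 4 u (0,(1/4)) = 0 \<and> poly2 4 w (0,(1/4)) = 0" by (rule E) simp_all
  note e5u = e5[THEN conjunct1] and e5w = e5[THEN conjunct2]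
  have e6: "poly2 4 u (0,(1/2)) = 0 \<and> poly2 4 w (0,(1/2)) = 0" by (rule E) simp_all
  note e6u = e6[THEN conjunct1] and e6w = e6[THEN conjunct2]
  have e7: "poly2 4 u (0,(3/4)) = 0 \<and> poly2 4 w (0,(3/4)) = 0" by (rule E) simp_all
  note e7u = e7[THEN conjunct1] and e7w = e7[THEN conjunct2]
  have e8: "poly2 4 u (0,1) = 0 \<and> poly2 4 w (0,1) = 0" by (rule E) simp_all
  note e8u = e8[THEN conjunct1] and e8w = e8[THEN conjunct2]
  have e9: "poly2 4 u ((1/4),(3/4)) = 0 \<and> poly2 4 w ((1/4),(3/4)) = 0" by (rule E) simp_all
  note e9u = e9[THEN conjunct1] and e9w = e9[THEN conjunct2]
  have e10: "poly2 4 u ((1/2),(1/2)) = 0 \<and> poly2 4 w ((1/2),(1/2)) = 0" by (rule E) simp_all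
  note e10u = e10[THEN conjunct1] and e10w = e10[THEN conjunct2]
  have e11: "poly2 4 u ((3/4),(1/4)) = 0 \<and> poly2 4 w ((3/4),(1/4)) = 0" by (rule E) simp_all
  note e11u = e11[THEN conjunct1] and e11w = e11[THEN conjunct2]
  have d0: "px 4 u ((1/6),(1/6)) + py 4 w ((1/6),(1/6)) = 0" by (rule Dv) simp_all
  have d1: "px 4 u ((1/6),(1/3)) + py 4 w ((1/6),(1/3)) = 0" by (rule Dv) simp_all
  have d2: "px 4 u ((1/6),(1/2)) + py 4 w ((1/6),(1/2)) = 0" by (rule Dv) simp_all
  have d3: "px 4 u ((1/6),(2/3)) + py 4 w ((1/6),(2/3)) = 0" by (rule Dv) simp_all
  have d4: "px 4 u ((1/3),(1/6)) + py 4 w ((1/3),(1/6)) = 0" by (rule Dv) simp_all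
  have d5: "px 4 u ((1/3),(1/3)) + py 4 w ((1/3),(1/3)) = 0" by (rule Dv) simp_all
  have d6: "px 4 u ((1/3),(1/2)) + py 4 w ((1/3),(1/2)) = 0" by (rule Dv) simp_all
  have d7: "px 4 u ((1/2),(1/6)) + py 4 w ((1/2),(1/6)) = 0" by (rule Dv) simp_all
  have d8: "px 4 u ((1/2),(1/3)) + py 4 w ((1/2),(1/3)) = 0" by (rule Dv) simp_all
  have d9: "px 4 u ((2/3),(1/6)) + py 4 w ((2/3),(1/6)) = 0" by (rule Dv) simp_all
  have zu00: "u 0 0 = 0"
  proof -
    have "u 0 0 = 1 * poly2 4 u (0,0)"
      unfolding poly2_4 px_4 py_4 by (simp add: power_divide algebra_simps, (simp add: field_simps)?)
    also have "\<dots> = 0" using e0u e0w e1u e1w e2u e2w e3u e3w e4u e4w e5u e5w e6u e6w e7u e7w e8u e8w e9u e9w e10u e10w e11u e11w d0 d1 d2 d3 d4 d5 d6 d7 d8 d9 by simp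
    finally show ?thesis .
  qed
  have zu01: "u 0 1 = 0"
  proof -
    have "u 0 1 = (-25/3) * poly2 4 u (0,0) + 16 * poly2 4 u (0,(1/4)) + (-12) * poly2 4 u (0,(1/2)) + (16/3) * poly2 4 u (0,(3/4)) + (-1) * poly2 4 u (0,1)"
      unfolding poly2_4 px_4 py_4 by (simp add: power_divide algebra_simps, (simp add: field_simps)?)
    also have "\<dots> = 0" using e0u e0w e1u e1w e2u e2w e3u e3w e4u e4w e5u e5w e6u e6w e7u e7w e8u e8w e9u e9w e10u e10w e11u e11w d0 d1 d2 d3 d4 d5 d6 d7 d8 d9 by simp
    finally show ?thesis .
  qed
  have zu02: "u 0 2 = 0"
  proof -
    have "u 0 2 = (70/3) * poly2 4 u (0,0) + (-208/3) * poly2 4 u (0,(1/4)) + 76 * poly2 4 u (0,(1/2)) + (-112/3) * poly2 4 u (0,(3/4)) + (22/3) * poly2 4 u (0,1)"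
      unfolding poly2_4 px_4 py_4 by (simp add: power_divide algebra_simps, (simp add: field_simps)?)
    also have "\<dots> = 0" using e0u e0w e1u e1w e2u e2w e3u e3w e4u e4w e5u e5w e6u e6w e7u e7w e8u e8w e9u e9w e10u e10w e11u e11w d0 d1 d2 d3 d4 d5 d6 d7 d8 d9 by simp
    finally show ?thesis .
  qed
  have zu03: "u 0 3 = 0"
  proof -
    have "u 0 3 = (-80/3) * poly2 4 u (0,0) + 96 * poly2 4 u (0,(1/4)) + (-128) * poly2 4 u (0,(1/2)) + (224/3) * poly2 4 u (0,(3/4)) + (-16) * poly2 4 u (0,1)"
      unfolding poly2_4 px_4 py_4 by (simp add: power_divide algebra_simps, (simp add: field_simps)?)
    also have "\<dots> = 0" using e0u e0w e1u e1w e2u e2w e3u e3w e4u e4w e5u e5w e6u e6w e7u e7w e8u e8w e9u e9w e10u e10w e11u e11w d0 d1 d2 d3 d4 d5 d6 d7 d8 d9 by simp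
    finally show ?thesis .
  qed
  have zu04: "u 0 4 = 0"
  proof -
    have "u 0 4 = (32/3) * poly2 4 u (0,0) + (-128/3) * poly2 4 u (0,(1/4)) + 64 * poly2 4 u (0,(1/2)) + (-128/3) * poly2 4 u (0,(3/4)) + (32/3) * poly2 4 u (0,1)"
      unfolding poly2_4 px_4 py_4 by (simp add: power_divide algebra_simps, (simp add: field_simps)?)
    also have "\<dots> = 0" using e0u e0w e1u e1w e2u e2w e3u e3w e4u e4w e5u e5w e6u e6w e7u e7w e8u e8w e9u e9w e10u e10w e11u e11w d0 d1 d2 d3 d4 d5 d6 d7 d8 d9 by simp
    finally show ?thesis .
  qed
  have zu10: "u 1 0 = 0"
  proof -
    have "u 1 0 = (-25/3) * poly2 4 u (0,0) + 16 * poly2 4 u ((1/4),0) + (-12) * poly2 4 u ((1/2),0) + (16/3) * poly2 4 u ((3/4),0) + (-1) * poly2 4 u (1,0)"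
      unfolding poly2_4 px_4 py_4 by (simp add: power_divide algebra_simps, (simp add: field_simps)?)
    also have "\<dots> = 0" using e0u e0w e1u e1w e2u e2w e3u e3w e4u e4w e5u e5w e6u e6w e7u e7w e8u e8w e9u e9w e10u e10w e11u e11w d0 d1 d2 d3 d4 d5 d6 d7 d8 d9 by simp
    finally show ?thesis .
  qed
  have zu11: "u 1 1 = 0"
  proof -
    have "u 1 1 = (1853/90) * poly2 4 u (0,0) + (-2347/90) * poly2 4 w (0,0) + (-1888/45) * poly2 4 u ((1/4),0) + (-56/15) * poly2 4 w ((1/4),0) + (132/5) * poly2 4 u ((1/2),0) + (-154/15) * poly2 4 w ((1/2),0) + (-224/45) * poly2 4 u ((3/4),0) + (136/45) * poly2 4 w ((3/4),0) + (-1/18) * poly2 4 u (1,0) + (-8/3) * poly2 4 u (0,(1/4)) + (880/9) * poly2 4 w (0,(1/4)) + (-38/3) * poly2 4 u (0,(1/2)) + (-128) * poly2 4 w (0,(1/2)) + (56/9) * poly2 4 u (0,(3/4)) + (656/9) * poly2 4 w (0,(3/4)) + (-1493/90) * poly2 4 w (0,1) + (-56/9) * poly2 4 u ((1/4),(3/4)) + (56/15) * poly2 4 w ((1/4),(3/4)) + (38/3) * poly2 4 u ((1/2),(1/2)) + (154/15) * poly2 4 w ((1/2),(1/2)) + (8/3) * poly2 4 u ((3/4),(1/4)) + (-136/45) * poly2 4 w ((3/4),(1/4)) + (-114/5) * (px 4 u ((1/6),(1/6)) + py 4 w ((1/6),(1/6))) + (306/5) * (px 4 u ((1/6),(1/3))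 + py 4 w ((1/6),(1/3))) + (-234/5) * (px 4 u ((1/6),(1/2)) + py 4 w ((1/6),(1/2))) + (66/5) * (px 4 u ((1/6),(2/3)) + py 4 w ((1/6),(2/3))) + (-21/2) * (px 4 u ((1/3),(1/3)) + py 4 w ((1/3),(1/3)))"
      unfolding poly2_4 px_4 py_4 by (simp add: power_divide algebra_simps, (simp add: field_simps)?)
    also have "\<dots> = 0" using e0u e0w e1u e1w e2u e2w e3u e3w e4u e4w e5u e5w e6u e6w e7u e7w e8u e8w e9u e9w e10u e10w e11u e11w d0 d1 d2 d3 d4 d5 d6 d7 d8 d9 by simp
    finally show ?thesis .
  qed
  have zu12: "u 1 2 = 0"
  proof -
    have "u 1 2 = (-1013/90) * poly2 4 u (0,0) + (6187/90) * poly2 4 w (0,0) + (1168/45) * poly2 4 u ((1/4),0) + (56/15) * poly2 4 w ((1/4),0) + (-72/5) * poly2 4 u ((1/2),0) + (154/15) * poly2 4 w ((1/2),0) + (-16/45) * poly2 4 u ((3/4),0) + (-136/45) * poly2 4 w ((3/4),0) + (1/18) * poly2 4 u (1,0) + (-8/3) * poly2 4 u (0,(1/4)) + (-2416/9) * poly2 4 w (0,(1/4)) + (74/3) * poly2 4 u (0,(1/2)) + 384 * poly2 4 w (0,(1/2)) + (-200/9) * poly2 4 u (0,(3/4)) + (-2192/9) * poly2 4 w (0,(3/4)) + (5333/90) * poly2 4 w (0,1) + (200/9) * poly2 4 u ((1/4),(3/4)) + (-56/15) * poly2 4 w ((1/4),(3/4)) + (-74/3) * poly2 4 u ((1/2),(1/2))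 + (-154/15) * poly2 4 w ((1/2),(1/2)) + (8/3) * poly2 4 u ((3/4),(1/4)) + (136/45) * poly2 4 w ((3/4),(1/4)) + (294/5) * (px 4 u ((1/6),(1/6)) + py 4 w ((1/6),(1/6))) + (-846/5) * (px 4 u ((1/6),(1/3)) + py 4 w ((1/6),(1/3))) + (774/5) * (px 4 u ((1/6),(1/2)) + py 4 w ((1/6),(1/2))) + (-246/5) * (px 4 u ((1/6),(2/3)) + py 4 w ((1/6),(2/3))) + (21/2) * (px 4 u ((1/3),(1/3)) + py 4 w ((1/3),(1/3)))"
      unfolding poly2_4 px_4 py_4 by (simp add: power_divide algebra_simps, (simp add: field_simps)?)
    also have "\<dots> = 0" using e0u e0w e1u e1w e2u e2w e3u e3w e4u e4w e5u e5w e6u e6w e7u e7w e8u e8w e9u e9w e10u e10w e11u e11w d0 d1 d2 d3 d4 d5 d6 d7 d8 d9 by simp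
    finally show ?thesis .
  qed
  have zu13: "u 1 3 = 0"
  proof -
    have "u 1 3 = (-128/3) * poly2 4 w (0,0) + (512/3) * poly2 4 w (0,(1/4)) + (-256) * poly2 4 w (0,(1/2)) + (512/3) * poly2 4 w (0,(3/4)) + (-128/3) * poly2 4 w (0,1) + (-36) * (px 4 u ((1/6),(1/6)) + py 4 w ((1/6),(1/6))) + 108 * (px 4 u ((1/6),(1/3)) + py 4 w ((1/6),(1/3))) + (-108) * (px 4 u ((1/6),(1/2)) + py 4 w ((1/6),(1/2))) + 36 * (px 4 u ((1/6),(2/3)) + py 4 w ((1/6),(2/3)))"
      unfolding poly2_4 px_4 py_4 by (simp add: power_divide algebra_simps, (simp add: field_simps)?)
    also have "\<dots> = 0" using e0u e0w e1u e1w e2u e2w e3u e3w e4u e4w e5u e5w e6u e6w e7u e7w e8u e8w e9u e9w e10u e10w e11u e11w d0 d1 d2 d3 d4 d5 d6 d7 d8 d9 by simp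
    finally show ?thesis .
  qed
  have zu20: "u 2 0 = 0"
  proof -
    have "u 2 0 = (70/3) * poly2 4 u (0,0) + (-208/3) * poly2 4 u ((1/4),0) + 76 * poly2 4 u ((1/2),0) + (-112/3) * poly2 4 u ((3/4),0) + (22/3) * poly2 4 u (1,0)"
      unfolding poly2_4 px_4 py_4 by (simp add: power_divide algebra_simps, (simp add: field_simps)?)
    also have "\<dots> = 0" using e0u e0w e1u e1w e2u e2w e3u e3w e4u e4w e5u e5w e6u e6w e7u e7w e8u e8w e9u e9w e10u e10w e11u e11w d0 d1 d2 d3 d4 d5 d6 d7 d8 d9 by simp
    finally show ?thesis .
  qed
  have zu21: "u 2 1 = 0"
  proof -
    have "u 2 1 = (-325/18) * poly2 4 u (0,0) + (1115/18) * poly2 4 w (0,0) + (1328/9) * poly2 4 u ((1/4),0) + (184/3) * poly2 4 w ((1/4),0) + (-184) * poly2 4 u ((1/2),0) + (26/3) * poly2 4 w ((1/2),0) + (592/9) * poly2 4 u ((3/4),0) + (-8/9) * poly2 4 w ((3/4),0) + (-203/18) * poly2 4 u (1,0) + (-8/3) * poly2 4 u (0,(1/4)) + (-1840/9) * poly2 4 w (0,(1/4)) + (194/3) * poly2 4 u (0,(1/2)) + 256 * poly2 4 w (0,(1/2)) + (184/9) * poly2 4 u (0,(3/4)) + (-1232/9) * poly2 4 w (0,(3/4)) + (421/18) * poly2 4 w (0,1) + (-184/9) * poly2 4 u ((1/4),(3/4)) + (-184/3) * poly2 4 w ((1/4),(3/4)) + (-194/3) * poly2 4 u ((1/2),(1/2))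 + (-26/3) * poly2 4 w ((1/2),(1/2)) + (8/3) * poly2 4 u ((3/4),(1/4)) + (8/9) * poly2 4 w ((3/4),(1/4)) + 66 * (px 4 u ((1/6),(1/6)) + py 4 w ((1/6),(1/6))) + (-126) * (px 4 u ((1/6),(1/3)) + py 4 w ((1/6),(1/3))) + 90 * (px 4 u ((1/6),(1/2)) + py 4 w ((1/6),(1/2))) + (-6) * (px 4 u ((1/6),(2/3)) + py 4 w ((1/6),(2/3))) + (57/2) * (px 4 u ((1/3),(1/3)) + py 4 w ((1/3),(1/3)))"
      unfolding poly2_4 px_4 py_4 by (simp add: power_divide algebra_simps, (simp add: field_simps)?)
    also have "\<dots> = 0" using e0u e0w e1u e1w e2u e2w e3u e3w e4u e4w e5u e5w e6u e6w e7u e7w e8u e8w e9u e9w e10u e10w e11u e11w d0 d1 d2 d3 d4 d5 d6 d7 d8 d9 by simp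
    finally show ?thesis .
  qed
  have zu22: "u 2 2 = 0"
  proof -
    have "u 2 2 = (-218/15) * poly2 4 u (0,0) + (-1178/15) * poly2 4 w (0,0) + (-1024/15) * poly2 4 u ((1/4),0) + (-288/5) * poly2 4 w ((1/4),0) + (528/5) * poly2 4 u ((1/2),0) + (8/5) * poly2 4 w ((1/2),0) + (-512/15) * poly2 4 u ((3/4),0) + (-32/15) * poly2 4 w ((3/4),0) + (34/3) * poly2 4 u (1,0) + 32 * poly2 4 u (0,(1/4)) + (832/3) * poly2 4 w (0,(1/4)) + (-104) * poly2 4 u (0,(1/2)) + (-384) * poly2 4 w (0,(1/2)) + (32/3) * poly2 4 u (0,(3/4)) + (704/3) * poly2 4 w (0,(3/4)) + (-742/15) * poly2 4 w (0,1) + (-32/3) * poly2 4 u ((1/4),(3/4)) + (288/5) * poly2 4 w ((1/4),(3/4)) + 104 * poly2 4 u ((1/2),(1/2)) + (-8/5) * poly2 4 w ((1/2),(1/2)) + (-32) * poly2 4 u ((3/4),(1/4)) + (32/15) * poly2 4 w ((3/4),(1/4)) + (-396/5) * (px 4 u ((1/6),(1/6)) + py 4 w ((1/6),(1/6))) + (864/5) * (px 4 u ((1/6),(1/3)) + py 4 w ((1/6),(1/3))) + (-756/5) * (px 4 u ((1/6),(1/2)) + py 4 w ((1/6),(1/2))) + (144/5) * (px 4 u ((1/6),(2/3)) + py 4 w ((1/6),(2/3))) + (-18) * (px 4 u ((1/3),(1/3)) + py 4 w ((1/3),(1/3)))"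
      unfolding poly2_4 px_4 py_4 by (simp add: power_divide algebra_simps, (simp add: field_simps)?)
    also have "\<dots> = 0" using e0u e0w e1u e1w e2u e2w e3u e3w e4u e4w e5u e5w e6u e6w e7u e7w e8u e8w e9u e9w e10u e10w e11u e11w d0 d1 d2 d3 d4 d5 d6 d7 d8 d9 by simp
    finally show ?thesis .
  qed
  have zu30: "u 3 0 = 0"
  proof -
    have "u 3 0 = (-80/3) * poly2 4 u (0,0) + 96 * poly2 4 u ((1/4),0) + (-128) * poly2 4 u ((1/2),0) + (224/3) * poly2 4 u ((3/4),0) + (-16) * poly2 4 u (1,0)"
      unfolding poly2_4 px_4 py_4 by (simp add: power_divide algebra_simps, (simp add: field_simps)?)
    also have "\<dots> = 0" using e0u e0w e1u e1w e2u e2w e3u e3w e4u e4w e5u e5w e6u e6w e7u e7w e8u e8w e9u e9w e10u e10w e11u e11w d0 d1 d2 d3 d4 d5 d6 d7 d8 d9 by simp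
    finally show ?thesis .
  qed
  have zu31: "u 3 1 = 0"
  proof -
    have "u 3 1 = (34/5) * poly2 4 u (0,0) + (-538/15) * poly2 4 w (0,0) + (-1664/15) * poly2 4 u ((1/4),0) + (-288/5) * poly2 4 w ((1/4),0) + (848/5) * poly2 4 u ((1/2),0) + (8/5) * poly2 4 w ((1/2),0) + (-384/5) * poly2 4 u ((3/4),0) + (-32/15) * poly2 4 w ((3/4),0) + (34/3) * poly2 4 u (1,0) + (-32/3) * poly2 4 u (0,(1/4)) + (320/3) * poly2 4 w (0,(1/4)) + (-40) * poly2 4 u (0,(1/2)) + (-128) * poly2 4 w (0,(1/2)) + (-32) * poly2 4 u (0,(3/4)) + 64 * poly2 4 w (0,(3/4)) + (-34/5) * poly2 4 w (0,1) + 32 * poly2 4 u ((1/4),(3/4)) + (288/5) * poly2 4 w ((1/4),(3/4)) + 40 * poly2 4 u ((1/2),(1/2)) + (-8/5) * poly2 4 w ((1/2),(1/2)) + (32/3) * poly2 4 u ((3/4),(1/4)) + (32/15) * poly2 4 w ((3/4),(1/4)) + (-216/5) * (px 4 u ((1/6),(1/6)) + py 4 w ((1/6),(1/6))) + (324/5) * (px 4 u ((1/6),(1/3)) + py 4 w ((1/6),(1/3))) + (-216/5) * (px 4 u ((1/6),(1/2)) + py 4 w ((1/6),(1/2))) + (-36/5) * (px 4 u ((1/6),(2/3)) + py 4 w ((1/6),(2/3))) + (-18) * (px 4 u ((1/3),(1/3)) + py 4 w ((1/3),(1/3)))"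
      unfolding poly2_4 px_4 py_4 by (simp add: power_divide algebra_simps, (simp add: field_simps)?)
    also have "\<dots> = 0" using e0u e0w e1u e1w e2u e2w e3u e3w e4u e4w e5u e5w e6u e6w e7u e7w e8u e8w e9u e9w e10u e10w e11u e11w d0 d1 d2 d3 d4 d5 d6 d7 d8 d9 by simp
    finally show ?thesis .
  qed
  have zu40: "u 4 0 = 0"
  proof -
    have "u 4 0 = (32/3) * poly2 4 u (0,0) + (-128/3) * poly2 4 u ((1/4),0) + 64 * poly2 4 u ((1/2),0) + (-128/3) * poly2 4 u ((3/4),0) + (32/3) * poly2 4 u (1,0)"
      unfolding poly2_4 px_4 py_4 by (simp add: power_divide algebra_simps, (simp add: field_simps)?)
    also have "\<dots> = 0" using e0u e0w e1u e1w e2u e2w e3u e3w e4u e4w e5u e5w e6u e6w e7u e7w e8u e8w e9u e9w e10u e10w e11u e11w d0 d1 d2 d3 d4 d5 d6 d7 d8 d9 by simp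
    finally show ?thesis .
  qed
  have zw00: "w 0 0 = 0"
  proof -
    have "w 0 0 = 1 * poly2 4 w (0,0)"
      unfolding poly2_4 px_4 py_4 by (simp add: power_divide algebra_simps, (simp add: field_simps)?)
    also have "\<dots> = 0" using e0u e0w e1u e1w e2u e2w e3u e3w e4u e4w e5u e5w e6u e6w e7u e7w e8u e8w e9u e9w e10u e10w e11u e11w d0 d1 d2 d3 d4 d5 d6 d7 d8 d9 by simp
    finally show ?thesis .
  qed
  have zw01: "w 0 1 = 0"
  proof -
    have "w 0 1 = (-25/3) * poly2 4 w (0,0) + 16 * poly2 4 w (0,(1/4)) + (-12) * poly2 4 w (0,(1/2)) + (16/3) * poly2 4 w (0,(3/4)) + (-1) * poly2 4 w (0,1)"
      unfolding poly2_4 px_4 py_4 by (simp add: power_divide algebra_simps, (simp add: field_simps)?)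
    also have "\<dots> = 0" using e0u e0w e1u e1w e2u e2w e3u e3w e4u e4w e5u e5w e6u e6w e7u e7w e8u e8w e9u e9w e10u e10w e11u e11w d0 d1 d2 d3 d4 d5 d6 d7 d8 d9 by simp
    finally show ?thesis .
  qed
  have zw02: "w 0 2 = 0"
  proof -
    have "w 0 2 = (70/3) * poly2 4 w (0,0) + (-208/3) * poly2 4 w (0,(1/4)) + 76 * poly2 4 w (0,(1/2)) + (-112/3) * poly2 4 w (0,(3/4)) + (22/3) * poly2 4 w (0,1)"
      unfolding poly2_4 px_4 py_4 by (simp add: power_divide algebra_simps, (simp add: field_simps)?)
    also have "\<dots> = 0" using e0u e0w e1u e1w e2u e2w e3u e3w e4u e4w e5u e5w e6u e6w e7u e7w e8u e8w e9u e9w e10u e10w e11u e11w d0 d1 d2 d3 d4 d5 d6 d7 d8 d9 by simp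
    finally show ?thesis .
  qed
  have zw03: "w 0 3 = 0"
  proof -
    have "w 0 3 = (-80/3) * poly2 4 w (0,0) + 96 * poly2 4 w (0,(1/4)) + (-128) * poly2 4 w (0,(1/2)) + (224/3) * poly2 4 w (0,(3/4)) + (-16) * poly2 4 w (0,1)"
      unfolding poly2_4 px_4 py_4 by (simp add: power_divide algebra_simps, (simp add: field_simps)?)
    also have "\<dots> = 0" using e0u e0w e1u e1w e2u e2w e3u e3w e4u e4w e5u e5w e6u e6w e7u e7w e8u e8w e9u e9w e10u e10w e11u e11w d0 d1 d2 d3 d4 d5 d6 d7 d8 d9 by simp
    finally show ?thesis .
  qed
  have zw04: "w 0 4 = 0"
  proof -
    have "w 0 4 = (32/3) * poly2 4 w (0,0) + (-128/3) * poly2 4 w (0,(1/4)) + 64 * poly2 4 w (0,(1/2)) + (-128/3) * poly2 4 w (0,(3/4)) + (32/3) * poly2 4 w (0,1)"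
      unfolding poly2_4 px_4 py_4 by (simp add: power_divide algebra_simps, (simp add: field_simps)?)
    also have "\<dots> = 0" using e0u e0w e1u e1w e2u e2w e3u e3w e4u e4w e5u e5w e6u e6w e7u e7w e8u e8w e9u e9w e10u e10w e11u e11w d0 d1 d2 d3 d4 d5 d6 d7 d8 d9 by simp
    finally show ?thesis .
  qed
  have zw10: "w 1 0 = 0"
  proof -
    have "w 1 0 = (-25/3) * poly2 4 w (0,0) + 16 * poly2 4 w ((1/4),0) + (-12) * poly2 4 w ((1/2),0) + (16/3) * poly2 4 w ((3/4),0) + (-1) * poly2 4 w (1,0)"
      unfolding poly2_4 px_4 py_4 by (simp add: power_divide algebra_simps, (simp add: field_simps)?)
    also have "\<dots> = 0" using e0u e0w e1u e1w e2u e2w e3u e3w e4u e4w e5u e5w e6u e6w e7u e7w e8u e8w e9u e9w e10u e10w e11u e11w d0 d1 d2 d3 d4 d5 d6 d7 d8 d9 by simp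
    finally show ?thesis .
  qed
  have zw11: "w 1 1 = 0"
  proof -
    have "w 1 1 = (12223/360) * poly2 4 u (0,0) + (29023/360) * poly2 4 w (0,0) + (-692/45) * poly2 4 u ((1/4),0) + (2/5) * poly2 4 w ((1/4),0) + (-172/5) * poly2 4 u ((1/2),0) + (113/30) * poly2 4 w ((1/2),0) + (884/45) * poly2 4 u ((3/4),0) + (-106/45) * poly2 4 w ((3/4),0) + (-275/72) * poly2 4 u (1,0) + (-2/3) * poly2 4 u (0,(1/4)) + (-1396/9) * poly2 4 w (0,(1/4)) + (37/6) * poly2 4 u (0,(1/2)) + 120 * poly2 4 w (0,(1/2)) + (-50/9) * poly2 4 u (0,(3/4)) + (-524/9) * poly2 4 w (0,(3/4)) + (4577/360) * poly2 4 w (0,1) + (50/9) * poly2 4 u ((1/4),(3/4)) + (-2/5) * poly2 4 w ((1/4),(3/4)) + (-37/6) * poly2 4 u ((1/2),(1/2)) + (-113/30) * poly2 4 w ((1/2),(1/2)) + (2/3) * poly2 4 u ((3/4),(1/4)) + (106/45) * poly2 4 w ((3/4),(1/4)) + (249/5) * (px 4 u ((1/6),(1/6)) + py 4 w ((1/6),(1/6))) + (-351/5) * (px 4 u ((1/6),(1/3)) + py 4 w ((1/6),(1/3))) + (234/5) * (px 4 u ((1/6),(1/2)) + py 4 w ((1/6),(1/2))) + (-66/5) * (px 4 u ((1/6),(2/3)) + py 4 w ((1/6),(2/3))) + (-9) * (px 4 u ((1/3),(1/6)) + py 4 w ((1/3),(1/6))) + (57/8) * (px 4 u ((1/3),(1/3))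 + py 4 w ((1/3),(1/3)))"
      unfolding poly2_4 px_4 py_4 by (simp add: power_divide algebra_simps, (simp add: field_simps)?)
    also have "\<dots> = 0" using e0u e0w e1u e1w e2u e2w e3u e3w e4u e4w e5u e5w e6u e6w e7u e7w e8u e8w e9u e9w e10u e10w e11u e11w d0 d1 d2 d3 d4 d5 d6 d7 d8 d9 by simp
    finally show ?thesis .
  qed
  have zw12: "w 1 2 = 0"
  proof -
    have "w 1 2 = (-4763/72) * poly2 4 u (0,0) + (-10523/72) * poly2 4 w (0,0) + (196/9) * poly2 4 u ((1/4),0) + (-142/3) * poly2 4 w ((1/4),0) + 76 * poly2 4 u ((1/2),0) + (179/6) * poly2 4 w ((1/2),0) + (-388/9) * poly2 4 u ((3/4),0) + (-94/9) * poly2 4 w ((3/4),0) + (827/72) * poly2 4 u (1,0) + (50/3) * poly2 4 u (0,(1/4)) + (3364/9) * poly2 4 w (0,(1/4)) + (-157/6) * poly2 4 u (0,(1/2)) + (-364) * poly2 4 w (0,(1/2)) + (-286/9) * poly2 4 u (0,(3/4)) + (1436/9) * poly2 4 w (0,(3/4)) + (-1669/72) * poly2 4 w (0,1) + (286/9) * poly2 4 u ((1/4),(3/4)) + (142/3) * poly2 4 w ((1/4),(3/4)) + (157/6) * poly2 4 u ((1/2),(1/2)) + (-179/6) * poly2 4 w ((1/2),(1/2)) + (-50/3) * poly2 4 u ((3/4),(1/4)) + (94/9) * poly2 4 w ((3/4),(1/4)) + (-93) * (px 4 u ((1/6),(1/6)) + py 4 w ((1/6),(1/6))) + 135 * (px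 4 u ((1/6),(1/3)) + py 4 w ((1/6),(1/3))) + (-90) * (px 4 u ((1/6),(1/2)) + py 4 w ((1/6),(1/2))) + 6 * (px 4 u ((1/6),(2/3)) + py 4 w ((1/6),(2/3))) + 9 * (px 4 u ((1/3),(1/6)) + py 4 w ((1/3),(1/6))) + (15/8) * (px 4 u ((1/3),(1/3)) + py 4 w ((1/3),(1/3)))"
      unfolding poly2_4 px_4 py_4 by (simp add: power_divide algebra_simps, (simp add: field_simps)?)
    also have "\<dots> = 0" using e0u e0w e1u e1w e2u e2w e3u e3w e4u e4w e5u e5w e6u e6w e7u e7w e8u e8w e9u e9w e10u e10w e11u e11w d0 d1 d2 d3 d4 d5 d6 d7 d8 d9 by simp
    finally show ?thesis .
  qed
  have zw13: "w 1 3 = 0"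
  proof -
    have "w 1 3 = (161/5) * poly2 4 u (0,0) + (1123/15) * poly2 4 w (0,0) + (-32/5) * poly2 4 u ((1/4),0) + (464/15) * poly2 4 w ((1/4),0) + (-208/5) * poly2 4 u ((1/2),0) + (-108/5) * poly2 4 w ((1/2),0) + (352/15) * poly2 4 u ((3/4),0) + (112/15) * poly2 4 w ((3/4),0) + (-23/3) * poly2 4 u (1,0) + (-16) * poly2 4 u (0,(1/4)) + (-224) * poly2 4 w (0,(1/4)) + 20 * poly2 4 u (0,(1/2)) + 256 * poly2 4 w (0,(1/2)) + (112/3) * poly2 4 u (0,(3/4)) + (-352/3) * poly2 4 w (0,(3/4)) + (157/15) * poly2 4 w (0,1) + (-112/3) * poly2 4 u ((1/4),(3/4)) + (-464/15) * poly2 4 w ((1/4),(3/4)) + (-20) * poly2 4 u ((1/2),(1/2)) + (108/5) * poly2 4 w ((1/2),(1/2)) + 16 * poly2 4 u ((3/4),(1/4)) + (-112/15) * poly2 4 w ((3/4),(1/4)) + (216/5) * (px 4 u ((1/6),(1/6)) + py 4 w ((1/6),(1/6))) + (-324/5) * (px 4 u ((1/6),(1/3)) + py 4 w ((1/6),(1/3))) + (216/5) * (px 4 u ((1/6),(1/2)) + py 4 w ((1/6),(1/2))) + (36/5) * (px 4 u ((1/6),(2/3)) + py 4 w ((1/6),(2/3))) + (-9) * (px 4 u ((1/3),(1/3)) + py 4 w ((1/3),(1/3)))"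
      unfolding poly2_4 px_4 py_4 by (simp add: power_divide algebra_simps, (simp add: field_simps)?)
    also have "\<dots> = 0" using e0u e0w e1u e1w e2u e2w e3u e3w e4u e4w e5u e5w e6u e6w e7u e7w e8u e8w e9u e9w e10u e10w e11u e11w d0 d1 d2 d3 d4 d5 d6 d7 d8 d9 by simp
    finally show ?thesis .
  qed
  have zw20: "w 2 0 = 0"
  proof -
    have "w 2 0 = (70/3) * poly2 4 w (0,0) + (-208/3) * poly2 4 w ((1/4),0) + 76 * poly2 4 w ((1/2),0) + (-112/3) * poly2 4 w ((3/4),0) + (22/3) * poly2 4 w (1,0)"
      unfolding poly2_4 px_4 py_4 by (simp add: power_divide algebra_simps, (simp add: field_simps)?)
    also have "\<dots> = 0" using e0u e0w e1u e1w e2u e2w e3u e3w e4u e4w e5u e5w e6u e6w e7u e7w e8u e8w e9u e9w e10u e10w e11u e11w d0 d1 d2 d3 d4 d5 d6 d7 d8 d9 by simp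
    finally show ?thesis .
  qed
  have zw21: "w 2 1 = 0"
  proof -
    have "w 2 1 = (-45433/360) * poly2 4 u (0,0) + (-74233/360) * poly2 4 w (0,0) + (4652/45) * poly2 4 u ((1/4),0) + (-26/15) * poly2 4 w ((1/4),0) + (372/5) * poly2 4 u ((1/2),0) + (-863/30) * poly2 4 w ((1/2),0) + (-2924/45) * poly2 4 u ((3/4),0) + (886/45) * poly2 4 w ((3/4),0) + (965/72) * poly2 4 u (1,0) + (14/3) * poly2 4 u (0,(1/4)) + (3580/9) * poly2 4 w (0,(1/4)) + (-259/6) * poly2 4 u (0,(1/2)) + (-324) * poly2 4 w (0,(1/2)) + (350/9) * poly2 4 u (0,(3/4)) + (1604/9) * poly2 4 w (0,(3/4)) + (-16487/360) * poly2 4 w (0,1) + (-350/9) * poly2 4 u ((1/4),(3/4)) + (26/15) * poly2 4 w ((1/4),(3/4)) + (259/6) * poly2 4 u ((1/2),(1/2)) + (863/30) * poly2 4 w ((1/2),(1/2)) + (-14/3) * poly2 4 u ((3/4),(1/4)) + (-886/45) * poly2 4 w ((3/4),(1/4)) + (-879/5) * (px 4 u ((1/6),(1/6)) + py 4 w ((1/6),(1/6))) + (1161/5) * (px 4 u ((1/6),(1/3)) + py 4 w ((1/6),(1/3))) + (-774/5) * (px 4 u ((1/6),(1/2)) + py 4 w ((1/6),(1/2))) + (246/5) * (px 4 u ((1/6),(2/3)) + py 4 w ((1/6),(2/3))) + 63 * (px 4 u ((1/3),(1/6)) + py 4 w ((1/3),(1/6))) + (-399/8) * (px 4 u ((1/3),(1/3))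 + py 4 w ((1/3),(1/3)))"
      unfolding poly2_4 px_4 py_4 by (simp add: power_divide algebra_simps, (simp add: field_simps)?)
    also have "\<dots> = 0" using e0u e0w e1u e1w e2u e2w e3u e3w e4u e4w e5u e5w e6u e6w e7u e7w e8u e8w e9u e9w e10u e10w e11u e11w d0 d1 d2 d3 d4 d5 d6 d7 d8 d9 by simp
    finally show ?thesis .
  qed
  have zw22: "w 2 2 = 0"
  proof -
    have "w 2 2 = (2489/20) * poly2 4 u (0,0) + (3769/20) * poly2 4 w (0,0) + (-472/5) * poly2 4 u ((1/4),0) + (348/5) * poly2 4 w ((1/4),0) + (-408/5) * poly2 4 u ((1/2),0) + (-243/5) * poly2 4 w ((1/2),0) + (344/5) * poly2 4 u ((3/4),0) + (84/5) * poly2 4 w ((3/4),0) + (-69/4) * poly2 4 u (1,0) + (-20) * poly2 4 u (0,(1/4)) + (-440) * poly2 4 w (0,(1/4)) + 57 * poly2 4 u (0,(1/2)) + 408 * poly2 4 w (0,(1/2)) + 4 * poly2 4 u (0,(3/4)) + (-200) * poly2 4 w (0,(3/4)) + (871/20) * poly2 4 w (0,1) + (-4) * poly2 4 u ((1/4),(3/4)) + (-348/5) * poly2 4 w ((1/4),(3/4)) + (-57) * poly2 4 u ((1/2),(1/2)) + (243/5) * poly2 4 w ((1/2),(1/2)) + 20 * poly2 4 u ((3/4),(1/4)) + (-84/5) * poly2 4 w ((3/4),(1/4)) + (846/5) * (px 4 u ((1/6),(1/6)) + py 4 w ((1/6),(1/6))) + (-1134/5) * (px 4 u ((1/6),(1/3))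 + py 4 w ((1/6),(1/3))) + (756/5) * (px 4 u ((1/6),(1/2)) + py 4 w ((1/6),(1/2))) + (-144/5) * (px 4 u ((1/6),(2/3)) + py 4 w ((1/6),(2/3))) + (-54) * (px 4 u ((1/3),(1/6)) + py 4 w ((1/3),(1/6))) + (135/4) * (px 4 u ((1/3),(1/3)) + py 4 w ((1/3),(1/3)))"
      unfolding poly2_4 px_4 py_4 by (simp add: power_divide algebra_simps, (simp add: field_simps)?)
    also have "\<dots> = 0" using e0u e0w e1u e1w e2u e2w e3u e3w e4u e4w e5u e5w e6u e6w e7u e7w e8u e8w e9u e9w e10u e10w e11u e11w d0 d1 d2 d3 d4 d5 d6 d7 d8 d9 by simp
    finally show ?thesis .
  qed
  have zw30: "w 3 0 = 0"
  proof -
    have "w 3 0 = (-80/3) * poly2 4 w (0,0) + 96 * poly2 4 w ((1/4),0) + (-128) * poly2 4 w ((1/2),0) + (224/3) * poly2 4 w ((3/4),0) + (-16) * poly2 4 w (1,0)"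
      unfolding poly2_4 px_4 py_4 by (simp add: power_divide algebra_simps, (simp add: field_simps)?)
    also have "\<dots> = 0" using e0u e0w e1u e1w e2u e2w e3u e3w e4u e4w e5u e5w e6u e6w e7u e7w e8u e8w e9u e9w e10u e10w e11u e11w d0 d1 d2 d3 d4 d5 d6 d7 d8 d9 by simp
    finally show ?thesis .
  qed
  have zw31: "w 3 1 = 0"
  proof -
    have "w 3 1 = (369/4) * poly2 4 u (0,0) + (1619/12) * poly2 4 w (0,0) + (-88) * poly2 4 u ((1/4),0) + (-4) * poly2 4 w ((1/4),0) + (-40) * poly2 4 u ((1/2),0) + 37 * poly2 4 w ((1/2),0) + (136/3) * poly2 4 u ((3/4),0) + (-100/3) * poly2 4 w ((3/4),0) + (-115/12) * poly2 4 u (1,0) + (-4) * poly2 4 u (0,(1/4)) + (-776/3) * poly2 4 w (0,(1/4)) + 37 * poly2 4 u (0,(1/2)) + 216 * poly2 4 w (0,(1/2)) + (-100/3) * poly2 4 u (0,(3/4)) + (-376/3) * poly2 4 w (0,(3/4)) + (397/12) * poly2 4 w (0,1) + (100/3) * poly2 4 u ((1/4),(3/4)) + 4 * poly2 4 w ((1/4),(3/4)) + (-37) * poly2 4 u ((1/2),(1/2)) + (-37) * poly2 4 w ((1/2),(1/2)) + 4 * poly2 4 u ((3/4),(1/4)) + (100/3) * poly2 4 w ((3/4),(1/4)) + 126 * (px 4 u ((1/6),(1/6)) + py 4 w ((1/6),(1/6))) + (-162) * (px 4 u ((1/6),(1/3)) + py 4 w ((1/6),(1/3))) + 108 * (px 4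 u ((1/6),(1/2)) + py 4 w ((1/6),(1/2))) + (-36) * (px 4 u ((1/6),(2/3)) + py 4 w ((1/6),(2/3))) + (-54) * (px 4 u ((1/3),(1/6)) + py 4 w ((1/3),(1/6))) + (171/4) * (px 4 u ((1/3),(1/3)) + py 4 w ((1/3),(1/3)))"
      unfolding poly2_4 px_4 py_4 by (simp add: power_divide algebra_simps, (simp add: field_simps)?)
    also have "\<dots> = 0" using e0u e0w e1u e1w e2u e2w e3u e3w e4u e4w e5u e5w e6u e6w e7u e7w e8u e8w e9u e9w e10u e10w e11u e11w d0 d1 d2 d3 d4 d5 d6 d7 d8 d9 by simp
    finally show ?thesis .
  qed
  have zw40: "w 4 0 = 0"
  proof -
    have "w 4 0 = (32/3) * poly2 4 w (0,0) + (-128/3) * poly2 4 w ((1/4),0) + 64 * poly2 4 w ((1/2),0) + (-128/3) * poly2 4 w ((3/4),0) + (32/3) * poly2 4 w (1,0)"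
      unfolding poly2_4 px_4 py_4 by (simp add: power_divide algebra_simps, (simp add: field_simps)?)
    also have "\<dots> = 0" using e0u e0w e1u e1w e2u e2w e3u e3w e4u e4w e5u e5w e6u e6w e7u e7w e8u e8w e9u e9w e10u e10w e11u e11w d0 d1 d2 d3 d4 d5 d6 d7 d8 d9 by simp
    finally show ?thesis .
  qed
  obtain x y where "z = (x,y)" by (cases z)
  then show ?thesis by (simp only: poly2_4 zu00 zu01 zu02 zu03 zu04 zu10 zu11 zu12 zu13 zu20 zu21 zu22 zu30 zu31 zu40 zw00 zw01 zw02 zw03 zw04 zw10 zw11 zw12 zw13 zw20 zw21 zw22 zw30 zw31 zw40, simp)
qed

lemma ispoly_poly2: "ispoly k (poly2 k c)" unfolding ispoly_def by blast

theorem lemma3p1: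
  fixes K :: "(real \<times> real) set" and v :: "real \<times> real \<Rightarrow> real \<times> real"
  assumes "is_triangle K"
    and "v \<in> bubble K"
    and "\<forall>z\<in>interior K. divergence v z = 0"
  shows "v = (\<lambda>z. 0)"
proof -
  obtain a b c where nc: "\<not> collinear {a,b,c}" and K: "K = convex hull {a,b,c}"
    using assms(1) unfolding is_triangle_def by blast
  obtain c1 where h1: "\<forall>z\<in>K. fst (v z) = poly2 4 c1 z" and o1: "\<forall>z. z \<notin> K \<longrightarrow> fst (v z) = 0"
    using assms(2) unfolding bubble_def Pk2_def Pk_def by blast
  obtain c2 where h2: "\<forall>z\<in>K. snd (v z) = poly2 4 c2 z" and o2: "\<forall>z. z \<notin> K \<longrightarrow> snd (v z) = 0"
    using assms(2) unfolding bubble_def Pk2_def Pk_def by blast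
  have fr: "\<forall>z\<in>frontier K. v z = 0" using assms(2) unfolding bubble_def by blast
  define p q r w where "p = fst (b-a)" "q = snd (b-a)" "r = fst (c-a)" "w = snd (c-a)"
  define D where "D = dt a b c"
  have DD: "D = p*w - q*r" by (simp add: D_def dt_def p_q_r_w_def)
  have Dnz: "D \<noteq> 0" using dtnz[OF nc] by (simp add: D_def)
  have FFe: "FF a b c s t = (fst a + t*r + s*p, snd a + t*w + s*q)" for s t
    by (simp add: FF_def p_q_r_w_def prod_eq_iff algebra_simps)
  have FFe2: "FF a b c s t = (fst a + s*p + t*r, snd a + s*q + t*w)" for s t
    by (simp add: FF_def p_q_r_w_def prod_eq_iff algebra_simps)
  define P1 where "P1 = (\<lambda>z. poly2 4 c1 (FF a b c (fst z) (snd z)))"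
  define P2 where "P2 = (\<lambda>z. poly2 4 c2 (FF a b c (fst z) (snd z)))"
  define U where "U = (\<lambda>z. (w * P1 z - r * P2 z) / D)"
  define W where "W = (\<lambda>z. (p * P2 z - q * P1 z) / D)"
  have iP1: "ispoly 4 P1"
  proof -
    have "ispoly 4 (\<lambda>z. poly2 4 c1 (fst a + p * fst z + r * snd z, snd a + q * fst z + w * snd z))"
      by (intro ispoly_compose ispoly_poly2 ispoly_affine)
    moreover have "P1 = (\<lambda>z. poly2 4 c1 (fst a + p * fst z + r * snd z, snd a + q * fst z + w * snd z))"
      by (simp add: P1_def FFe2 fun_eq_iff algebra_simps)
    ultimately show ?thesis by simp
  qed
  have iP2: "ispoly 4 P2"
  proof -
    have "ispoly 4 (\<lambda>z. poly2 4 c2 (fst a + p * fst z + r * snd z, snd a + q * fst z + w * snd z))"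
      by (intro ispoly_compose ispoly_poly2 ispoly_affine)
    moreover have "P2 = (\<lambda>z. poly2 4 c2 (fst a + p * fst z + r * snd z, snd a + q * fst z + w * snd z))"
      by (simp add: P2_def FFe2 fun_eq_iff algebra_simps)
    ultimately show ?thesis by simp
  qed
  have "ispoly 4 (\<lambda>z. (w / D) * P1 z + (- r / D) * P2 z)"
    by (intro ispoly_add ispoly_scale iP1 iP2)
  moreover have "U = (\<lambda>z. (w / D) * P1 z + (- r / D) * P2 z)"
    by (simp add: U_def fun_eq_iff diff_divide_distrib)
  ultimately have "ispoly 4 U" by simp
  then obtain cu where cu: "\<And>z. U z = poly2 4 cu z" unfolding ispoly_def by blast
  have "ispoly 4 (\<lambda>z. (p / D) * P2 z + (- q / D) * P1 z)"
    by (intro ispoly_add ispoly_scale iP1 iP2)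
  moreover have "W = (\<lambda>z. (p / D) * P2 z + (- q / D) * P1 z)"
    by (simp add: W_def fun_eq_iff diff_divide_distrib)
  ultimately have "ispoly 4 W" by simp
  then obtain cw where cw: "\<And>z. W z = poly2 4 cw z" unfolding ispoly_def by blast

  have edge: "poly2 4 cu (s,t) = 0 \<and> poly2 4 cw (s,t) = 0"
    if "0 \<le> s" "0 \<le> t" "s + t \<le> 1" "s = 0 \<or> t = 0 \<or> s + t = 1" for s t
  proof -
    have zf: "FF a b c s t \<in> frontier K" unfolding K by (rule frontier_pt[OF nc that])
    have zK: "FF a b c s t \<in> K" unfolding K using that by (simp add: hull_char[OF nc] G_FF[OF nc])
    have "v (FF a b c s t) = 0" using fr zf by blast
    then have "P1 (s,t) = 0" "P2 (s,t) = 0" using h1 h2 zK by (auto simp: P1_def P2_def)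
    then show ?thesis using cu[of "(s,t)"] cw[of "(s,t)"] by (simp add: U_def W_def)
  qed

  have divv: "divergence v z = px 4 c1 z + py 4 c2 z" if zi: "z \<in> interior K" for z
  proof -
    obtain x y where z: "z = (x,y)" by (cases z)
    have IK: "interior K \<subseteq> K" by (rule interior_subset)
    have S1: "open {s. (s, y) \<in> interior K}"
    proof -
      have "open ((\<lambda>s. (s, y)) -` interior K)"
        by (rule continuous_open_vimage) (auto intro!: continuous_intros)
      then show ?thesis by (simp add: vimage_def)
    qed
    have S2: "open {t. (x, t) \<in> interior K}"
    proof -
      have "open ((\<lambda>t. (x, t)) -` interior K)"
        by (rule continuous_open_vimage) (auto intro!: continuous_intros)
      then show ?thesis by (simp add: vimage_def)
    qed
    have d1: "((\<lambda>s. fst (v (s, y))) has_real_derivative px 4 c1 (x, y)) (at x)"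
      by (rule has_field_derivative_transform_within_open[OF poly2_deriv_x S1])
         (use zi z h1 IK in auto)
    have d2: "((\<lambda>t. snd (v (x, t))) has_real_derivative py 4 c2 (x, y)) (at y)"
      by (rule has_field_derivative_transform_within_open[OF poly2_deriv_y S2])
         (use zi z h2 IK in auto)
    show ?thesis unfolding divergence_def z using DERIV_imp_deriv[OF d1] DERIV_imp_deriv[OF d2] by simp
  qed

  have divU: "px 4 cu (s,t) + py 4 cw (s,t) = 0" if "0 < s" "0 < t" "s + t < 1" for s t
  proof -
    define z0 where "z0 = FF a b c s t"
    have zi: "z0 \<in> interior K" unfolding K z0_def by (rule interior_pt[OF nc that])
    have div0: "px 4 c1 z0 + py 4 c2 z0 = 0" using assms(3) zi divv by simp
    have dU: "((\<lambda>s'. U (s',t)) has_real_derivative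
       (w * (p * px 4 c1 z0 + q * py 4 c1 z0) - r * (p * px 4 c2 z0 + q * py 4 c2 z0)) / D) (at s)"
      unfolding U_def P1_def P2_def fst_conv snd_conv FFe z0_def
      by (intro DERIV_cdivide DERIV_diff DERIV_cmult poly2_dir_deriv)
    have dU2: "((\<lambda>s'. U (s',t)) has_real_derivative px 4 cu (s,t)) (at s)"
      unfolding cu by (rule poly2_deriv_x)
    have eU: "px 4 cu (s,t) = (w * (p * px 4 c1 z0 + q * py 4 c1 z0) - r * (p * px 4 c2 z0 + q * py 4 c2 z0)) / D"
      using DERIV_unique[OF dU2 dU] .
    have dW: "((\<lambda>t'. W (s,t')) has_real_derivative
       (p * (r * px 4 c2 z0 + w * py 4 c2 z0) - q * (r * px 4 c1 z0 + w * py 4 c1 z0)) / D) (at t)"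
      unfolding W_def P1_def P2_def fst_conv snd_conv FFe2 z0_def
      by (intro DERIV_cdivide DERIV_diff DERIV_cmult poly2_dir_deriv)
    have dW2: "((\<lambda>t'. W (s,t')) has_real_derivative py 4 cw (s,t)) (at t)"
      unfolding cw by (rule poly2_deriv_y)
    have eW: "py 4 cw (s,t) = (p * (r * px 4 c2 z0 + w * py 4 c2 z0) - q * (r * px 4 c1 z0 + w * py 4 c1 z0)) / D"
      using DERIV_unique[OF dW2 dW] .
    have "px 4 cu (s,t) + py 4 cw (s,t) = (D * (px 4 c1 z0 + py 4 c2 z0)) / D"
      unfolding eU eW DD by (simp add: add_divide_distrib[symmetric] algebra_simps)
    also have "\<dots> = 0" using div0 by simp
    finally show ?thesis .
  qed

  have U0: "U z = 0" and W0: "W z = 0" for z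
    using alg4[of cu cw z, OF edge divU] cu cw by auto
  have P10: "P1 z = 0" and P20: "P2 z = 0" for z
  proof -
    have a1: "w * P1 z - r * P2 z = 0" using U0[of z] Dnz by (simp add: U_def)
    have a2: "p * P2 z - q * P1 z = 0" using W0[of z] Dnz by (simp add: W_def)
    have "D * P1 z = p * (w * P1 z - r * P2 z) + r * (p * P2 z - q * P1 z)"
      by (simp add: DD algebra_simps)
    then have "D * P1 z = 0" using a1 a2 by simp
    then show "P1 z = 0" using Dnz by simp
    have "D * P2 z = q * (w * P1 z - r * P2 z) + w * (p * P2 z - q * P1 z)"
      by (simp add: DD algebra_simps)
    then have "D * P2 z = 0" using a1 a2 by simp
    then show "P2 z = 0" using Dnz by simp
  qed
  show ?thesis
  proof
    fix z
    show "v z = 0"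
    proof (cases "z \<in> K")
      case True
      have zz: "FF a b c (G1 a b c z) (G2 a b c z) = z" by (rule FF_G[OF nc])
      have "poly2 4 c1 z = 0" using P10[of "(G1 a b c z, G2 a b c z)"] zz by (simp add: P1_def)
      moreover have "poly2 4 c2 z = 0" using P20[of "(G1 a b c z, G2 a b c z)"] zz by (simp add: P2_def)
      ultimately show ?thesis using True h1 h2 by (simp add: prod_eq_iff)
    next
      case False
      have "fst (v z) = 0" using o1 False by blast
      moreover have "snd (v z) = 0" using o2 False by blast
      ultimately show ?thesis by (simp add: prod_eq_iff)
    qed
  qed
qed

end
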